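(* There is no $*$-term $P$ such that $se(P)=X[\triangle\mapsto Y]$ for some $X\in\mathcal T_{A,\triangle}$ and $Y\in\mathcal T_A$ where $X\neq\triangle$, $X$ contains a leaf $\triangle$, and $X$ contains no leaf $\mathsf T$ and no leaf $\mathsf F$.
   Context: Let $A$ be a nonempty set of atoms; terms are closed terms over constants $\mathsf T,\mathsf F$, atoms $a\in A$, unary $\neg$, binary $\land^\circ$, $\lor^\circ$. Evaluation trees $\mathcal T_A$: $\mathsf T,\mathsf F\in\mathcal T_A$ and $(X\unlhd a\unrhd Y)\in\mathcal T_A$ for $X,Y\in\mathcal T_A$, $a\in A$. $\mathcal T_{A,\triangle}$: the same with leaves in $\{\mathsf T,\mathsf F,\triangle\}$. Leaf replacement $X[\ell_1\mapsto Y_1,\ldots]$ replaces every leaf labelled $\ell_i$ by $Y_i$. $se$: $se(\mathsf T)=\mathsf T$, $se(\mathsf F)=\mathsf F$, $se(a)=\mathsf T\unlhd a\unrhd\mathsf F$, $se(\neg P)=se(P)[\mathsf T\mapsto\mathsf F,\mathsf F\mapsto\mathsf T]$, $se(P\land^\circ Q)=se(P)[\mathsf T\mapsto se(Q)]$, $se(P\lor^\circ Q)=se(P)[\mathsf F\mapsto se(Q)]$. Syntactic categories ($a\in A$): $\mathsf T$-terms $P^{\mathsf T}::=\mathsf T\mid(a\land^\circ P^{\mathsf T})\lor^\circ P^{\mathsf T}$; $\mathsf F$-terms $P^{\mathsf F}::=\mathsf F\mid(a\lor^\circ P^{\mathsf F})\land^\circ P^{\mathsf F}$; $\ell$-terms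 $P^\ell::=(a\land^\circ P^{\mathsf T})\lor^\circ P^{\mathsf F}\mid(\neg a\land^\circ P^{\mathsf T})\lor^\circ P^{\mathsf F}$; $*$-terms $P^*::=P^c\mid P^d$, $P^c::=P^\ell\mid P^*\land^\circ P^d$, $P^d::=P^\ell\mid P^*\lor^\circ P^c$. *)

theory Defs
  imports Main
begin

datatype 'a pterm =
    TT | FF | Atom 'a | Neg "'a pterm"
  | LAnd "'a pterm" "'a pterm"
  | LOr "'a pterm" "'a pterm"

datatype 'a tree = LT | LF | LTri | Node "'a tree" 'a "'a tree"

fun leaves :: "'a tree \<Rightarrow> 'a tree set" where
  "leaves LT = {LT}"
| "leaves LF = {LF}"
| "leaves LTri = {LTri}"
| "leaves (Node X a Y) = leaves X \<union> leaves Y"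

definition in_TA :: "'a tree \<Rightarrow> bool" where
  "in_TA X \<longleftrightarrow> LTri \<notin> leaves X"

fun repl :: "'a tree \<Rightarrow> 'a tree \<Rightarrow> 'a tree \<Rightarrow> 'a tree \<Rightarrow> 'a tree" where
  "repl rT rF rD LT = rT"
| "repl rT rF rD LF = rF"
| "repl rT rF rD LTri = rD"
| "repl rT rF rD (Node X a Y) = Node (repl rT rF rD X) a (repl rT rF rD Y)"

fun se :: "'a pterm \<Rightarrow> 'a tree" where
  "se TT = LT"
| "se FF = LF"
| "se (Atom a) = Node LT a LF"
| "se (Neg P) = repl LF LT LTri (se P)"
| "se (LAnd P Q) = repl (se Q) LF LTri (se P)"
| "se (LOr P Q) = repl LT (se Q) LTri (se P)"

inductive Tterm :: "'a pterm \<Rightarrow> bool" where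
  "Tterm TT"
| "Tterm P \<Longrightarrow> Tterm Q \<Longrightarrow> Tterm (LOr (LAnd (Atom a) P) Q)"

inductive Fterm :: "'a pterm \<Rightarrow> bool" where
  "Fterm FF"
| "Fterm P \<Longrightarrow> Fterm Q \<Longrightarrow> Fterm (LAnd (LOr (Atom a) P) Q)"

inductive lterm :: "'a pterm \<Rightarrow> bool" where
  "Tterm P \<Longrightarrow> Fterm Q \<Longrightarrow> lterm (LOr (LAnd (Atom a) P) Q)"
| "Tterm P \<Longrightarrow> Fterm Q \<Longrightarrow> lterm (LOr (LAnd (Neg (Atom a)) P) Q)"

inductive starterm :: "'a pterm \<Rightarrow> bool"
  and cterm :: "'a pterm \<Rightarrow> bool"
  and dterm :: "'a pterm \<Rightarrow> bool" where
  "cterm P \<Longrightarrow> starterm P"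
| "dterm P \<Longrightarrow> starterm P"
| "lterm P \<Longrightarrow> cterm P"
| "starterm P \<Longrightarrow> dterm Q \<Longrightarrow> cterm (LAnd P Q)"
| "lterm P \<Longrightarrow> dterm P"
| "starterm P \<Longrightarrow> cterm Q \<Longrightarrow> dterm (LOr P Q)"

end

theory Submission
  imports Defs
begin

inductive fil :: "'a tree \<Rightarrow> 'a tree \<Rightarrow> bool" where
  "fil Y Y"
| "fil Y t1 \<Longrightarrow> fil Y t2 \<Longrightarrow> fil Y (Node t1 a t2)"

definition nf :: "'a tree \<Rightarrow> 'a tree \<Rightarrow> bool" where
  "nf Y t \<longleftrightarrow> (\<exists>t1 a t2. t = Node t1 a t2 \<and> fil Y t1 \<and> fil Y t2)"

fun sub :: "'a tree \<Rightarrow> 'a tree \<Rightarrow> 'a tree \<Rightarrow> 'a tree" where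
  "sub l S (Node X a Y) = Node (sub l S X) a (sub l S Y)"
| "sub l S W = (if W = l then S else W)"

lemma subT: "repl S LF LTri W = sub LT S W"
  by (induction W) auto
lemma subF: "repl LT S LTri W = sub LF S W"
  by (induction W) auto

lemma leaves_sub: "leaves W \<subseteq> {LT, LF, LTri}"
  by (induction W) auto

lemma sub_id: "l \<notin> leaves W \<Longrightarrow> sub l S W = W"
  by (induction W) auto

lemma sub_size: "l \<in> leaves W \<Longrightarrow> W \<noteq> l \<Longrightarrow> l \<in> {LT, LF, LTri} \<Longrightarrow> size S < size (sub l S W)"
proof (induction W)
  case (Node X a Y)
  have e: "sub l S l = S" using Node.prems(3) by auto
  show ?case
  proof (cases "l \<in> leaves X")
    case True
    then show ?thesis using Node e by (cases "X = l") auto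
  next
    case False
    then have "l \<in> leaves Y" using Node by auto
    then show ?thesis using Node e by (cases "Y = l") auto
  qed
qed auto

lemma sub_self: "sub l S W = S \<Longrightarrow> l \<in> leaves S \<Longrightarrow> l \<in> {LT, LF, LTri} \<Longrightarrow> W = l"
  using sub_size[of l W S] sub_id[of l W S] by (cases "l \<in> leaves W") auto

lemma sub_leaf: "W \<noteq> l \<Longrightarrow> W \<in> {LT, LF, LTri} \<Longrightarrow> sub l S W = W"
  by auto

lemma sub_node: "\<exists>X a Y. sub l S (Node X' a' Y') = Node X a Y"
  by simp

lemma sub_inj_leaf: "l \<in> leaves S \<Longrightarrow> l \<in> {LT, LF, LTri} \<Longrightarrow> W1 \<in> {LT, LF, LTri} \<Longrightarrow>
   sub l S W1 = sub l S W2 \<Longrightarrow> W1 = W2"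
proof -
  assume a: "l \<in> leaves S" "l \<in> {LT, LF, LTri}" "W1 \<in> {LT, LF, LTri}" "sub l S W1 = sub l S W2"
  show "W1 = W2"
  proof (cases "W1 = l")
    case True
    then have "sub l S W2 = S" using a by auto
    then show ?thesis using sub_self a True by metis
  next
    case False
    then have w1: "sub l S W1 = W1" using a(3) by auto
    show ?thesis
    proof (cases "W2 = l")
      case True
      then have "W1 = S" using a w1 by auto
      then show ?thesis using a False by auto
    next
      case F2: False
      show ?thesis
      proof (cases W2)
        case (Node X b Y)
        then show ?thesis using a(3,4) w1 by auto
      qed (use a w1 F2 in auto)
    qed
  qed
qed

lemma sub_inj: "l \<in> leaves S \<Longrightarrow> l \<in> {LT, LF, LTri} \<Longrightarrow> sub l S W1 = sub l S W2 \<Longrightarrow> W1 = W2"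
proof (induction W1 arbitrary: W2)
  case (Node X a Y)
  show ?case
  proof (cases W2)
    case (Node X2 b Y2)
    then show ?thesis using Node.IH Node.prems by auto
  next
    case LT then show ?thesis using sub_inj_leaf[of l S W2 "Node X a Y"] Node.prems by auto
  next
    case LF then show ?thesis using sub_inj_leaf[of l S W2 "Node X a Y"] Node.prems by auto
  next
    case LTri then show ?thesis using sub_inj_leaf[of l S W2 "Node X a Y"] Node.prems by auto
  qed
next
  case LT then show ?case using sub_inj_leaf[of l S LT W2] by simp
next
  case LF then show ?case using sub_inj_leaf[of l S LF W2] by simp
next
  case LTri then show ?case using sub_inj_leaf[of l S LTri W2] by simp
qed

lemma fil_ne: "fil Y S \<Longrightarrow> Y \<noteq> S \<Longrightarrow> nf Y S"
  by (induction rule: fil.induct) (auto simp: nf_def)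

lemma fil_leaf: "fil Y W \<Longrightarrow> W \<in> {LT, LF, LTri} \<Longrightarrow> Y = W"
  by (erule fil.cases) auto

lemma keyL_leaf: "fil Y (sub l S Z) \<Longrightarrow> Z \<in> {LT, LF, LTri} \<Longrightarrow> l \<in> {LT, LF, LTri} \<Longrightarrow>
   (\<exists>Y0. fil Y0 Z \<and> sub l S Y0 = Y) \<or> nf Y S"
proof (cases "Z = l")
  case True
  assume a: "fil Y (sub l S Z)" "l \<in> {LT, LF, LTri}"
  then have s: "sub l S Z = S" using True by auto
  show ?thesis
  proof (cases "Y = S")
    case True
    then show ?thesis using s fil.intros(1)[of Z] by blast
  next
    case False
    then show ?thesis using fil_ne a s by auto
  qed
next
  case False
  assume a: "fil Y (sub l S Z)" "Z \<in> {LT, LF, LTri}"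
  then have s: "sub l S Z = Z" using False by auto
  then have "Y = Z" using fil_leaf a by metis
  then show ?thesis using s fil.intros(1)[of Z] by blast
qed

lemma keyL: "fil Y (sub l S Z) \<Longrightarrow> l \<in> leaves S \<Longrightarrow> l \<in> {LT, LF, LTri} \<Longrightarrow>
   (\<exists>Y0. fil Y0 Z \<and> sub l S Y0 = Y) \<or> nf Y S"
proof (induction Z)
  case (Node Z1 a Z2)
  show ?case
  proof (cases "Y = sub l S (Node Z1 a Z2)")
    case True
    have "fil (Node Z1 a Z2) (Node Z1 a Z2)" by (rule fil.intros(1))
    then show ?thesis using True by blast
  next
    case False
    have "fil Y (Node (sub l S Z1) a (sub l S Z2))" using Node.prems(1) by simp
    then have "fil Y (sub l S Z1) \<and> fil Y (sub l S Z2)"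
      using False by (cases rule: fil.cases) auto
    then have A: "(\<exists>Y0. fil Y0 Z1 \<and> sub l S Y0 = Y) \<or> nf Y S"
      and B: "(\<exists>Y0. fil Y0 Z2 \<and> sub l S Y0 = Y) \<or> nf Y S"
      using Node.IH(1)[OF _ Node.prems(2,3)] Node.IH(2)[OF _ Node.prems(2,3)] by simp_all
    show ?thesis
    proof (cases "nf Y S")
      case False
      then obtain Y1 Y2 where "fil Y1 Z1" "sub l S Y1 = Y" "fil Y2 Z2" "sub l S Y2 = Y"
        using A B by blast
      then have "Y1 = Y2" using sub_inj[of l S Y1 Y2] Node.prems(2,3) by simp
      then have "fil Y1 (Node Z1 a Z2)" using \<open>fil Y1 Z1\<close> \<open>fil Y2 Z2\<close> fil.intros(2) by simp
      then show ?thesis using \<open>sub l S Y1 = Y\<close> by blast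
    next
      case True then show ?thesis by (rule disjI2)
    qed
  qed
next
  case LT then show ?case using keyL_leaf[of Y l S LT] by simp
next
  case LF then show ?case using keyL_leaf[of Y l S LF] by simp
next
  case LTri then show ?case using keyL_leaf[of Y l S LTri] by simp
qed

lemma Tterm_leaves: "Tterm P \<Longrightarrow> leaves (se P) = {LT}"
  by (induction rule: Tterm.induct) (auto simp: subT subF sub_id)
lemma Fterm_leaves: "Fterm P \<Longrightarrow> leaves (se P) = {LF}"
  by (induction rule: Fterm.induct) (auto simp: subT subF sub_id)

lemma fil_leaves: "fil Y t \<Longrightarrow> leaves Y \<subseteq> leaves t"
  by (induction rule: fil.induct) auto

lemma leaves_ne: "leaves Y \<noteq> {}"
  by (induction Y) auto

lemma lterm_se: "lterm P \<Longrightarrow> \<exists>L a R. se P = Node L a R \<and>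
   ((leaves L = {LT} \<and> leaves R = {LF}) \<or> (leaves L = {LF} \<and> leaves R = {LT}))"
proof (induction rule: lterm.induct)
  case (1 P Q a)
  then show ?case using Tterm_leaves[of P] Fterm_leaves[of Q]
    by (auto simp: subT subF sub_id)
next
  case (2 P Q a)
  then show ?case using Tterm_leaves[of P] Fterm_leaves[of Q]
    by (auto simp: subT subF sub_id)
qed

lemma lterm_nf: "lterm P \<Longrightarrow> \<not> nf Y (se P)"
proof
  assume "lterm P" "nf Y (se P)"
  then obtain L a R where e: "se P = Node L a R" and
    lv: "(leaves L = {LT} \<and> leaves R = {LF}) \<or> (leaves L = {LF} \<and> leaves R = {LT})"
    using lterm_se by blast
  then have "fil Y L" "fil Y R" using \<open>nf Y (se P)\<close> unfolding nf_def by auto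
  then have "leaves Y \<subseteq> leaves L" "leaves Y \<subseteq> leaves R" using fil_leaves by blast+
  then have "leaves Y \<subseteq> leaves L \<inter> leaves R" by blast
  also have "leaves L \<inter> leaves R = {}" using lv by auto
  finally show False using leaves_ne[of Y] by blast
qed

lemma leaves_sub2: "l \<in> {LT, LF, LTri} \<Longrightarrow>
  leaves (sub l S W) = (leaves W - {l}) \<union> (if l \<in> leaves W then leaves S else {})"
  by (induction W) auto

lemma lterm_leaves: "lterm P \<Longrightarrow> LT \<in> leaves (se P) \<and> LF \<in> leaves (se P) \<and> LTri \<notin> leaves (se P)"
proof -
  assume "lterm P"
  then obtain L a R where e: "se P = Node L a R" and
    lv: "(leaves L = {LT} \<and> leaves R = {LF}) \<or> (leaves L = {LF} \<and> leaves R = {LT})"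
    using lterm_se by blast
  then show ?thesis by auto
qed

lemma star_leaves:
  "starterm P \<Longrightarrow> LT \<in> leaves (se P) \<and> LF \<in> leaves (se P) \<and> LTri \<notin> leaves (se P)"
  "cterm P \<Longrightarrow> LT \<in> leaves (se P) \<and> LF \<in> leaves (se P) \<and> LTri \<notin> leaves (se P)"
  "dterm P \<Longrightarrow> LT \<in> leaves (se P) \<and> LF \<in> leaves (se P) \<and> LTri \<notin> leaves (se P)"
proof (induction rule: starterm_cterm_dterm.inducts)
  case (3 P)
  then show ?case using lterm_leaves by blast
next
  case (5 P)
  then show ?case using lterm_leaves by blast
next
  case (4 P Q)
  then show ?case by (simp add: subT leaves_sub2)
next
  case (6 P Q)
  then show ?case by (simp add: subF leaves_sub2)
qed simp_all

lemma star_nf: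
  "starterm P \<Longrightarrow> \<forall>Y. \<not> nf Y (se P)"
  "cterm P \<Longrightarrow> \<forall>Y. \<not> nf Y (se P)"
  "dterm P \<Longrightarrow> \<forall>Y. \<not> nf Y (se P)"
proof (induction rule: starterm_cterm_dterm.inducts)
  case (3 P)
  then show ?case using lterm_nf by blast
next
  case (5 P)
  then show ?case using lterm_nf by blast
next
  case (4 P Q)
  show ?case
  proof (intro allI notI)
    fix Y assume "nf Y (se (LAnd P Q))"
    then obtain t1 a t2 where e: "sub LT (se Q) (se P) = Node t1 a t2" and f: "fil Y t1" "fil Y t2"
      by (auto simp: nf_def subT)
    have lq: "LT \<in> leaves (se Q)" using star_leaves(3)[OF 4(2)] by blast
    obtain Z1 b Z2 where z: "se P = Node Z1 b Z2"
    proof (cases "se P")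
      case LT then show ?thesis using star_leaves(1)[OF 4(1)] by simp
    next
      case LF then show ?thesis using star_leaves(1)[OF 4(1)] by simp
    next
      case LTri then show ?thesis using star_leaves(1)[OF 4(1)] by simp
    qed
    with e have "t1 = sub LT (se Q) Z1" "t2 = sub LT (se Q) Z2" "a = b" by auto
    then have A: "(\<exists>Y0. fil Y0 Z1 \<and> sub LT (se Q) Y0 = Y) \<or> nf Y (se Q)"
      and B: "(\<exists>Y0. fil Y0 Z2 \<and> sub LT (se Q) Y0 = Y) \<or> nf Y (se Q)"
      using keyL[of Y LT "se Q"] f lq by auto
    have "\<not> nf Y (se Q)" using 4 by blast
    then obtain Y1 Y2 where "fil Y1 Z1" "sub LT (se Q) Y1 = Y" "fil Y2 Z2" "sub LT (se Q) Y2 = Y"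
      using A B by blast
    then have "Y1 = Y2" using sub_inj[of LT "se Q" Y1 Y2] lq by auto
    then have "nf Y1 (se P)" using z \<open>fil Y1 Z1\<close> \<open>fil Y2 Z2\<close> by (auto simp: nf_def)
    then show False using 4 by blast
  qed
next
  case (6 P Q)
  show ?case
  proof (intro allI notI)
    fix Y assume "nf Y (se (LOr P Q))"
    then obtain t1 a t2 where e: "sub LF (se Q) (se P) = Node t1 a t2" and f: "fil Y t1" "fil Y t2"
      by (auto simp: nf_def subF)
    have lq: "LF \<in> leaves (se Q)" using star_leaves(2)[OF 6(2)] by blast
    obtain Z1 b Z2 where z: "se P = Node Z1 b Z2"
    proof (cases "se P")
      case LT then show ?thesis using star_leaves(1)[OF 6(1)] by simp
    next
      case LF then show ?thesis using star_leaves(1)[OF 6(1)] by simp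
    next
      case LTri then show ?thesis using star_leaves(1)[OF 6(1)] by simp
    qed
    with e have "t1 = sub LF (se Q) Z1" "t2 = sub LF (se Q) Z2" "a = b" by auto
    then have A: "(\<exists>Y0. fil Y0 Z1 \<and> sub LF (se Q) Y0 = Y) \<or> nf Y (se Q)"
      and B: "(\<exists>Y0. fil Y0 Z2 \<and> sub LF (se Q) Y0 = Y) \<or> nf Y (se Q)"
      using keyL[of Y LF "se Q"] f lq by auto
    have "\<not> nf Y (se Q)" using 6 by blast
    then obtain Y1 Y2 where "fil Y1 Z1" "sub LF (se Q) Y1 = Y" "fil Y2 Z2" "sub LF (se Q) Y2 = Y"
      using A B by blast
    then have "Y1 = Y2" using sub_inj[of LF "se Q" Y1 Y2] lq by auto
    then have "nf Y1 (se P)" using z \<open>fil Y1 Z1\<close> \<open>fil Y2 Z2\<close> by (auto simp: nf_def)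
    then show False using 6 by blast
  qed
qed simp_all

lemma fil_repl: "leaves X \<subseteq> {LTri} \<Longrightarrow> fil Y (repl LT LF Y X)"
  by (induction X) (auto intro: fil.intros)

theorem lemma3p3:
  "\<not> (\<exists>(P :: 'a pterm) X Y.
        starterm P \<and> in_TA Y \<and> X \<noteq> LTri \<and> LTri \<in> leaves X
        \<and> LT \<notin> leaves X \<and> LF \<notin> leaves X
        \<and> se P = repl LT LF Y X)"
proof
  assume "\<exists>(P :: 'a pterm) X Y.
        starterm P \<and> in_TA Y \<and> X \<noteq> LTri \<and> LTri \<in> leaves X
        \<and> LT \<notin> leaves X \<and> LF \<notin> leaves X
        \<and> se P = repl LT LF Y X"
  then obtain P :: "'a pterm" and X Y where h: "starterm P" "X \<noteq> LTri" "LTri \<in> leaves X"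
     "LT \<notin> leaves X" "LF \<notin> leaves X" "se P = repl LT LF Y X" by blast
  have lx: "leaves X \<subseteq> {LTri}" using h leaves_sub[of X] by blast
  obtain X1 a X2 where x: "X = Node X1 a X2" using h by (cases X) auto
  have "nf Y (se P)" using h(6) x lx fil_repl[of X1 Y] fil_repl[of X2 Y] by (auto simp: nf_def)
  then show False using star_nf(1)[OF h(1)] by blast
qed

end
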